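(* Let $G$ be a connected graph with $\omega(G)\in\{n(G)-1,\,n(G)-2,\,n(G)-3\}$ and $n(G)\ge \omega(G)+1\ge 4$. Then $$\dim_l(G)\le \left(\frac{\omega(G)-2}{\omega(G)-1}\right) n(G).$$
   Context: All graphs are finite and simple. $n(G)$ is the number of vertices and $\omega(G)$ the clique number of $G$. For vertices $x,y$ of a connected graph $G$, $d_G(x,y)$ is the length of a shortest $x,y$-path. A vertex $w$ distinguishes vertices $u,v$ if $d_G(u,w)\neq d_G(v,w)$. A set $W\subseteq V(G)$ is a local resolving set of $G$ if for every pair of adjacent vertices $u,v\in V(G)\setminus W$ some vertex of $W$ distinguishes $u$ and $v$. The local metric dimension $\dim_l(G)$ is the minimum cardinality of a local resolving set of $G$. *)

theory Defs
  imports Complex_Main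
begin

definition simple_graph :: "'a set \<Rightarrow> ('a \<Rightarrow> 'a \<Rightarrow> bool) \<Rightarrow> bool" where
  "simple_graph V E \<longleftrightarrow> finite V \<and> (\<forall>u v. E u v \<longrightarrow> u \<in> V \<and> v \<in> V)
      \<and> (\<forall>u v. E u v \<longrightarrow> E v u) \<and> (\<forall>v. \<not> E v v)"

definition is_walk :: "'a set \<Rightarrow> ('a \<Rightarrow> 'a \<Rightarrow> bool) \<Rightarrow> 'a list \<Rightarrow> bool" where
  "is_walk V E xs \<longleftrightarrow> xs \<noteq> [] \<and> set xs \<subseteq> V \<and> (\<forall>i. Suc i < length xs \<longrightarrow> E (xs ! i) (xs ! Suc i))"

definition connected_graph :: "'a set \<Rightarrow> ('a \<Rightarrow> 'a \<Rightarrow> bool) \<Rightarrow> bool" where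
  "connected_graph V E \<longleftrightarrow> V \<noteq> {} \<and>
     (\<forall>u\<in>V. \<forall>v\<in>V. \<exists>xs. is_walk V E xs \<and> hd xs = u \<and> last xs = v)"

definition gdist :: "'a set \<Rightarrow> ('a \<Rightarrow> 'a \<Rightarrow> bool) \<Rightarrow> 'a \<Rightarrow> 'a \<Rightarrow> nat" where
  "gdist V E x y = (LEAST k. \<exists>xs. is_walk V E xs \<and> hd xs = x \<and> last xs = y \<and> length xs = Suc k)"

definition is_clique :: "'a set \<Rightarrow> ('a \<Rightarrow> 'a \<Rightarrow> bool) \<Rightarrow> 'a set \<Rightarrow> bool" where
  "is_clique V E K \<longleftrightarrow> K \<subseteq> V \<and> (\<forall>u\<in>K. \<forall>v\<in>K. u \<noteq> v \<longrightarrow> E u v)"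

definition clique_number :: "'a set \<Rightarrow> ('a \<Rightarrow> 'a \<Rightarrow> bool) \<Rightarrow> nat" where
  "clique_number V E = Max {card K | K. is_clique V E K}"

definition local_resolving_set :: "'a set \<Rightarrow> ('a \<Rightarrow> 'a \<Rightarrow> bool) \<Rightarrow> 'a set \<Rightarrow> bool" where
  "local_resolving_set V E W \<longleftrightarrow> W \<subseteq> V \<and>
     (\<forall>u\<in>V - W. \<forall>v\<in>V - W. E u v \<longrightarrow> (\<exists>w\<in>W. gdist V E u w \<noteq> gdist V E v w))"

definition local_metric_dim :: "'a set \<Rightarrow> ('a \<Rightarrow> 'a \<Rightarrow> bool) \<Rightarrow> nat" where
  "local_metric_dim V E = Min {card W | W. local_resolving_set V E W}"

end

theory Submission imports Defs begin

lemma walk_cross: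
  assumes "is_walk V E xs" "hd xs \<in> P" "last xs \<notin> P"
  shows "\<exists>u v. u \<in> P \<and> v \<notin> P \<and> E u v \<and> u \<in> V \<and> v \<in> V"
  using assms
proof (induction xs)
  case Nil
  then show ?case by (simp add: is_walk_def)
next
  case (Cons x xs)
  show ?case
  proof (cases xs)
    case Nil
    then show ?thesis using Cons.prems by simp
  next
    case (Cons y ys)
    have w: "is_walk V E xs"
      using Cons.prems(1) unfolding is_walk_def Cons
    proof -
      assume h: "x # y # ys \<noteq> [] \<and> set (x # y # ys) \<subseteq> V \<and> (\<forall>i. Suc i < length (x # y # ys) \<longrightarrow> E ((x # y # ys) ! i) ((x # y # ys) ! Suc i))"
      show "y # ys \<noteq> [] \<and> set (y # ys) \<subseteq> V \<and> (\<forall>i. Suc i < length (y # ys) \<longrightarrow> E ((y # ys) ! i) ((y # ys) ! Suc i))"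
      proof (intro conjI allI impI)
        fix i assume "Suc i < length (y # ys)"
        then show "E ((y # ys) ! i) ((y # ys) ! Suc i)" using h[THEN conjunct2, THEN conjunct2, rule_format, of "Suc i"] by simp
      qed (use h in auto)
    qed
    have e: "E x y" using Cons.prems(1) unfolding is_walk_def Cons by (metis length_Cons nth_Cons_0 nth_Cons_Suc zero_less_Suc Suc_less_eq) 
    have V: "x \<in> V" "y \<in> V" using Cons.prems(1) unfolding is_walk_def Cons by auto
    show ?thesis
    proof (cases "y \<in> P")
      case True
      then show ?thesis using Cons.IH w Cons.prems \<open>xs = y # ys\<close> by auto
    next
      case False
      then show ?thesis using e V Cons.prems by auto
    qed
  qed
qed

lemma gdist_one:
  assumes "connected_graph V E" "u \<in> V" "x \<in> V" "u \<noteq> x"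
  shows "gdist V E u x = 1 \<longleftrightarrow> E u x"
proof -
  let ?P = "\<lambda>k. \<exists>xs. is_walk V E xs \<and> hd xs = u \<and> last xs = x \<and> length xs = Suc k"
  have n0: "\<not> ?P 0"
  proof
    assume "?P 0"
    then obtain xs where "hd xs = u" "last xs = x" "length xs = 1" by auto
    then show False using assms(4) by (cases xs) auto
  qed
  have ex: "\<exists>k. ?P k"
  proof -
    obtain xs where "is_walk V E xs" "hd xs = u" "last xs = x"
      using assms unfolding connected_graph_def by blast
    moreover have "xs \<noteq> []" using \<open>is_walk V E xs\<close> by (simp add: is_walk_def)
    ultimately have "?P (length xs - 1)" by auto
    then show ?thesis by blast
  qed
  show ?thesis
  proof
    assume "gdist V E u x = 1"
    hence "?P 1" using LeastI_ex[OF ex] unfolding gdist_def by simp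
    then obtain xs where xs: "is_walk V E xs" "hd xs = u" "last xs = x" "length xs = 2" by auto
    then obtain p q where "xs = [p, q]"
      by (metis (no_types, lifting) Suc_length_conv length_0_conv numeral_2_eq_2)
    then show "E u x" using xs unfolding is_walk_def by auto
  next
    assume "E u x"
    hence "?P 1" using assms by (intro exI[of _ "[u,x]"]) (auto simp: is_walk_def less_Suc_eq)
    show "gdist V E u x = 1" unfolding gdist_def
      by (rule Least_equality) (use \<open>?P 1\<close> n0 in \<open>auto simp: not_less_eq_eq[symmetric] less_Suc_eq_0_disj\<close>)
  qed
qed

definition good3 :: "'a set \<Rightarrow> ('a \<Rightarrow> 'a \<Rightarrow> bool) \<Rightarrow> 'a set \<Rightarrow> bool" where
  "good3 V E S \<longleftrightarrow> S \<subseteq> V \<and> card S = 3 \<and>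
     (\<forall>u\<in>S. \<forall>v\<in>S. E u v \<longrightarrow> (\<exists>x\<in>V - S. E x u \<noteq> E x v))"

lemma key:
  assumes sg: "simple_graph V E" and cg: "connected_graph V E"
    and cl: "\<And>K. is_clique V E K \<Longrightarrow> card K + 2 \<le> card V"
  shows "\<exists>S. good3 V E S"
proof (rule ccontr)
  assume nS: "\<nexists>S. good3 V E S"
  have fin: "finite V" using sg by (simp add: simple_graph_def)
  have sym: "\<And>u v. E u v \<Longrightarrow> E v u" and irr: "\<And>v. \<not> E v v"
    and inV: "\<And>u v. E u v \<Longrightarrow> u \<in> V \<and> v \<in> V"
    using sg by (auto simp: simple_graph_def)
  have nA: "\<not> (a \<in> V \<and> b \<in> V \<and> c \<in> V \<and> a \<noteq> b \<and> a \<noteq> c \<and> b \<noteq> c \<and> \<not> E a b \<and> \<not> E a c \<and> \<not> E b c)" for a b c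
  proof
    assume h: "a \<in> V \<and> b \<in> V \<and> c \<in> V \<and> a \<noteq> b \<and> a \<noteq> c \<and> b \<noteq> c \<and> \<not> E a b \<and> \<not> E a c \<and> \<not> E b c"
    have "good3 V E {a,b,c}" using h sym irr unfolding good3_def by auto
    then show False using nS by blast
  qed
  have nB: "\<not> (a \<in> V \<and> b \<in> V \<and> c \<in> V \<and> a \<noteq> b \<and> a \<noteq> c \<and> b \<noteq> c \<and> \<not> E a b \<and> \<not> E a c \<and> E b c
     \<and> (\<exists>x\<in>V - {a,b,c}. E x b \<noteq> E x c))" for a b c
  proof
    assume h: "a \<in> V \<and> b \<in> V \<and> c \<in> V \<and> a \<noteq> b \<and> a \<noteq> c \<and> b \<noteq> c \<and> \<not> E a b \<and> \<not> E a c \<and> E b c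
     \<and> (\<exists>x\<in>V - {a,b,c}. E x b \<noteq> E x c)"
    have "good3 V E {a,b,c}" using h sym irr unfolding good3_def by (auto; metis)
    then show False using nS by blast
  qed
  have nC: "\<not> (a \<in> V \<and> b \<in> V \<and> c \<in> V \<and> a \<noteq> b \<and> a \<noteq> c \<and> b \<noteq> c \<and> \<not> E a b \<and> E a c \<and> E b c
     \<and> (\<exists>x\<in>V - {a,b,c}. E x a \<noteq> E x c) \<and> (\<exists>x\<in>V - {a,b,c}. E x b \<noteq> E x c))" for a b c
  proof
    assume h: "a \<in> V \<and> b \<in> V \<and> c \<in> V \<and> a \<noteq> b \<and> a \<noteq> c \<and> b \<noteq> c \<and> \<not> E a b \<and> E a c \<and> E b c
     \<and> (\<exists>x\<in>V - {a,b,c}. E x a \<noteq> E x c) \<and> (\<exists>x\<in>V - {a,b,c}. E x b \<noteq> E x c)"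
    have "good3 V E {a,b,c}" using h sym irr unfolding good3_def by (auto; metis)
    then show False using nS by blast
  qed
  have "V \<noteq> {}" using cg by (simp add: connected_graph_def)
  then have "card V \<noteq> 0" using fin by simp
  then have "\<not> is_clique V E V" using cl by fastforce
  then obtain a b where ab: "a \<in> V" "b \<in> V" "a \<noteq> b" "\<not> E a b"
    unfolding is_clique_def by blast
  define X where "X = {x\<in>V. x \<noteq> b \<and> \<not> E x b}"
  define Y where "Y = {y\<in>V. y \<noteq> a \<and> \<not> E y a}"
  have aX: "a \<in> X" and bY: "b \<in> Y" and bX: "b \<notin> X" and aY: "a \<notin> Y"
    using ab sym unfolding X_def Y_def by auto
  have T1: "E z y \<longleftrightarrow> E z b" if "y \<in> Y" "z \<in> V" "z \<noteq> y" "z \<noteq> b" for y z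
  proof (cases "y = b")
    case False
    have yV: "y \<in> V" "y \<noteq> a" "\<not> E y a" using that unfolding Y_def by auto
    have "E b y" using nA[of a b y] ab yV False sym by blast
    show ?thesis
    proof (cases "z = a")
      case True then show ?thesis using yV ab sym by blast
    next
      case za: False
      show ?thesis using nB[of a b y] ab yV False \<open>E b y\<close> sym that za by blast
    qed
  qed simp
  have T2: "E z x \<longleftrightarrow> E z a" if "x \<in> X" "z \<in> V" "z \<noteq> x" "z \<noteq> a" for x z
  proof (cases "x = a")
    case False
    have xV: "x \<in> V" "x \<noteq> b" "\<not> E x b" using that unfolding X_def by auto
    have "E a x" using nA[of b a x] ab xV False sym by blast
    show ?thesis
    proof (cases "z = b")
      case True then show ?thesis using xV ab sym by blast
    next
      case zb: False
      show ?thesis using nB[of b a x] ab xV False \<open>E a x\<close> sym that zb by blast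
    qed
  qed simp
  \<comment> \<open>any vertex outside X and Y that is not universal gives case C\<close>
  have univ: "\<forall>z\<in>V. z \<noteq> c \<longrightarrow> E z c" if c: "c \<in> V" "c \<notin> X" "c \<notin> Y" for c
  proof (rule ccontr)
    assume "\<not> (\<forall>z\<in>V. z \<noteq> c \<longrightarrow> E z c)"
    then obtain z where z: "z \<in> V" "z \<noteq> c" "\<not> E z c" by blast
    have ca: "c \<noteq> a" "c \<noteq> b" using c aX bY by auto
    have Eca: "E c a" "E c b" using c ca unfolding X_def Y_def by auto
    have zab: "z \<noteq> a" "z \<noteq> b" using z Eca sym by auto
    have zY: "z \<notin> Y"
    proof
      assume "z \<in> Y"
      then have "E c z \<longleftrightarrow> E c b" using T1[of z c] c ca z by auto
      then show False using Eca z sym by blast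
    qed
    have zX: "z \<notin> X"
    proof
      assume "z \<in> X"
      then have "E c z \<longleftrightarrow> E c a" using T2[of z c] c ca z by auto
      then show False using Eca z sym by blast
    qed
    have "E z a" "E z b" using zX zY z zab unfolding X_def Y_def by auto
    then show False using nC[of a b c] ab c ca Eca sym z zab by blast
  qed
  obtain xs where xs: "is_walk V E xs" "hd xs = a" "last xs = b"
    using cg ab unfolding connected_graph_def by blast
  obtain u c where uc: "u \<in> X" "c \<notin> X" "E u c" "u \<in> V" "c \<in> V"
    using walk_cross[OF xs(1), of X] xs aX bX by auto
  have cY: "c \<notin> Y"
  proof
    assume cY: "c \<in> Y"
    show False
    proof (cases "c = b")
      case True then show ?thesis using uc unfolding X_def by auto
    next
      case False
      have "u \<noteq> c" using uc irr by auto
      moreover have "u \<noteq> b" using uc unfolding X_def by auto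
      ultimately have "E u c \<longleftrightarrow> E u b" using T1[of c u] cY uc by auto
      then show False using uc unfolding X_def by auto
    qed
  qed
  have ca: "c \<noteq> a" "c \<noteq> b" using uc cY aX bY by auto
  have Eca: "E c a" "E c b" using uc cY ca unfolding X_def Y_def by auto
  have cu: "\<forall>z\<in>V. z \<noteq> c \<longrightarrow> E z c" using univ uc cY by blast
  have small: "X \<subseteq> {a} \<or> Y \<subseteq> {b}"
  proof (rule ccontr)
    assume "\<not> (X \<subseteq> {a} \<or> Y \<subseteq> {b})"
    then obtain x y where xy: "x \<in> X" "x \<noteq> a" "y \<in> Y" "y \<noteq> b" by blast
    have "x \<in> V" "x \<noteq> b" "\<not> E x b" "y \<in> V" "y \<noteq> a" "\<not> E y a"
      using xy unfolding X_def Y_def by auto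
    moreover have "x \<noteq> c" "y \<noteq> c" using xy uc cY by auto
    ultimately have "y \<in> V - {a,b,c}" "E y a \<noteq> E y c" "x \<in> V - {a,b,c}" "E x b \<noteq> E x c"
      using cu xy by auto
    then show False using nC[of a b c] ab uc ca Eca sym by blast
  qed
  have Xcl: "E u v" if "u \<in> X" "v \<in> X" "u \<noteq> v" for u v
    using nA[of u v b] that ab unfolding X_def by auto
  have Ycl: "E u v" if "u \<in> Y" "v \<in> Y" "u \<noteq> v" for u v
    using nA[of u v a] that ab unfolding Y_def by auto
  have XYsub: "X \<subseteq> V" "Y \<subseteq> V" unfolding X_def Y_def by auto
  have cardV: "card V \<ge> 1" using ab fin by (metis card_0_eq empty_iff less_one not_le)
  show False
    using small
  proof
    assume "X \<subseteq> {a}"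
    have "is_clique V E (V - X)"
      unfolding is_clique_def
    proof (intro conjI ballI impI)
      fix p q assume pq: "p \<in> V - X" "q \<in> V - X" "p \<noteq> q"
      show "E p q"
      proof (cases "p \<in> Y \<and> q \<in> Y")
        case True then show ?thesis using Ycl pq by blast
      next
        case False
        then have "p \<notin> Y \<or> q \<notin> Y" by blast
        then show ?thesis
        proof
          assume "p \<notin> Y"
          have "p \<in> V" "p \<notin> X" "p \<notin> Y" using pq \<open>p \<notin> Y\<close> by auto
          then have "\<forall>z\<in>V. z \<noteq> p \<longrightarrow> E z p" by (rule univ)
          then have "E q p" using pq by auto
          then show ?thesis using sym by blast
        next
          assume "q \<notin> Y"
          have "q \<in> V" "q \<notin> X" "q \<notin> Y" using pq \<open>q \<notin> Y\<close> by auto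
          then have "\<forall>z\<in>V. z \<noteq> q \<longrightarrow> E z q" by (rule univ)
          then have "E p q" using pq by auto
          then show ?thesis using sym by blast
        qed
      qed
    qed blast
    then have c2: "card (V - X) + 2 \<le> card V" by (rule cl)
    have "X = {a}" using \<open>X \<subseteq> {a}\<close> aX by blast
    then have "card (V - X) = card V - 1" using fin ab by simp
    then show False using c2 cardV by linarith
  next
    assume "Y \<subseteq> {b}"
    have "is_clique V E (V - Y)"
      unfolding is_clique_def
    proof (intro conjI ballI impI)
      fix p q assume pq: "p \<in> V - Y" "q \<in> V - Y" "p \<noteq> q"
      show "E p q"
      proof (cases "p \<in> X \<and> q \<in> X")
        case True then show ?thesis using Xcl pq by blast
      next
        case False
        then have "p \<notin> X \<or> q \<notin> X" by blast
        then show ?thesis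
        proof
          assume "p \<notin> X"
          have "p \<in> V" "p \<notin> X" "p \<notin> Y" using pq \<open>p \<notin> X\<close> by auto
          then have "\<forall>z\<in>V. z \<noteq> p \<longrightarrow> E z p" by (rule univ)
          then have "E q p" using pq by auto
          then show ?thesis using sym by blast
        next
          assume "q \<notin> X"
          have "q \<in> V" "q \<notin> X" "q \<notin> Y" using pq \<open>q \<notin> X\<close> by auto
          then have "\<forall>z\<in>V. z \<noteq> q \<longrightarrow> E z q" by (rule univ)
          then have "E p q" using pq by auto
          then show ?thesis using sym by blast
        qed
      qed
    qed blast
    then have c2: "card (V - Y) + 2 \<le> card V" by (rule cl)
    have "Y = {b}" using \<open>Y \<subseteq> {b}\<close> bY by blast
    then have "card (V - Y) = card V - 1" using fin ab by simp
    then show False using c2 cardV by linarith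
  qed
qed


lemma arith_bound:
  fixes d w n :: nat
  assumes "w \<ge> 2" "d * (w - 1) \<le> (w - 2) * n"
  shows "real d \<le> ((real w - 2) / (real w - 1)) * real n"
proof -
  have pos: "real w - 1 > 0" using assms by simp
  have "real d * (real w - 1) \<le> (real w - 2) * real n"
  proof -
    have "real (d * (w - 1)) \<le> real ((w - 2) * n)" using assms(2) by (simp only: of_nat_le_iff)
    then show ?thesis using assms(1) by (simp add: of_nat_diff)
  qed
  then show ?thesis using pos by (simp add: field_simps)
qed

lemma clique_le:
  assumes "simple_graph V E" "is_clique V E K"
  shows "card K \<le> clique_number V E"
proof -
  have fin: "finite V" using assms by (simp add: simple_graph_def)
  have "{card K | K. is_clique V E K} \<subseteq> card ` Pow V" by (auto simp: is_clique_def)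
  then have "finite {card K | K. is_clique V E K}" using fin by (meson finite_surj finite_Pow_iff)
  then show ?thesis unfolding clique_number_def using assms(2) by (auto intro: Max_ge)
qed

lemma dim_le:
  assumes "simple_graph V E" "local_resolving_set V E W"
  shows "local_metric_dim V E \<le> card W"
proof -
  have fin: "finite V" using assms by (simp add: simple_graph_def)
  have "{card W | W. local_resolving_set V E W} \<subseteq> card ` Pow V" by (auto simp: local_resolving_set_def)
  then have "finite {card W | W. local_resolving_set V E W}" using fin by (meson finite_surj finite_Pow_iff)
  then show ?thesis unfolding local_metric_dim_def using assms(2) by (auto intro: Min_le)
qed

lemma lrs_good3:
  assumes sg: "simple_graph V E" and cg: "connected_graph V E" and g: "good3 V E S"
  shows "local_resolving_set V E (V - S)"
proof -
  have sym: "\<And>u v. E u v \<Longrightarrow> E v u" and irr: "\<And>v. \<not> E v v"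
    using sg by (auto simp: simple_graph_def)
  have SV: "S \<subseteq> V" using g by (simp add: good3_def)
  show ?thesis unfolding local_resolving_set_def
  proof (intro conjI ballI impI)
    fix u v assume u: "u \<in> V - (V - S)" and v: "v \<in> V - (V - S)" and e: "E u v"
    have uS: "u \<in> S" "v \<in> S" "u \<in> V" "v \<in> V" using u v by auto
    have "\<forall>u\<in>S. \<forall>v\<in>S. E u v \<longrightarrow> (\<exists>x\<in>V - S. E x u \<noteq> E x v)" using g by (simp add: good3_def)
    then obtain x where x: "x \<in> V - S" "E x u \<noteq> E x v" using uS e by blast
    have ne: "u \<noteq> x" "v \<noteq> x" using uS x by auto
    have g1: "gdist V E u x = 1 \<longleftrightarrow> E x u" using gdist_one[OF cg uS(3) _ ne(1)] x sym by blast
    have g2: "gdist V E v x = 1 \<longleftrightarrow> E x v" using gdist_one[OF cg uS(4) _ ne(2)] x sym by blast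
    show "\<exists>w\<in>V - S. gdist V E u w \<noteq> gdist V E v w"
      using g1 g2 x by metis
  qed auto
qed

lemma lrs_pair:
  assumes sg: "simple_graph V E" and ab: "a \<in> V" "b \<in> V" "\<not> E a b"
  shows "local_resolving_set V E (V - {a,b})"
proof -
  have sym: "\<And>u v. E u v \<Longrightarrow> E v u" and irr: "\<And>v. \<not> E v v"
    using sg by (auto simp: simple_graph_def)
  show ?thesis unfolding local_resolving_set_def
  proof (intro conjI ballI impI)
    fix u v assume u: "u \<in> V - (V - {a,b})" and v: "v \<in> V - (V - {a,b})" and e: "E u v"
    then have False using ab sym irr by blast
    then show "\<exists>w\<in>V - {a,b}. gdist V E u w \<noteq> gdist V E v w" ..
  qed auto
qed

theorem corollary3p2:
  fixes V :: "'a set" and E :: "'a \<Rightarrow> 'a \<Rightarrow> bool"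
  assumes "simple_graph V E" and "connected_graph V E"
    and "clique_number V E \<in> {card V - 1, card V - 2, card V - 3}"
    and "card V \<ge> clique_number V E + 1" and "clique_number V E + 1 \<ge> 4"
  shows "real (local_metric_dim V E)
           \<le> ((real (clique_number V E) - 2) / (real (clique_number V E) - 1)) * real (card V)"
proof -
  define w where "w = clique_number V E"
  define n where "n = card V"
  have fin: "finite V" using assms(1) by (simp add: simple_graph_def)
  have w3: "w \<ge> 3" and nw: "n \<ge> w + 1" and wcases: "w = n - 1 \<or> w = n - 2 \<or> w = n - 3"
    using assms(3-5) unfolding w_def n_def by auto
  show ?thesis
  proof (cases "w = n - 1")
    case True
    have "\<not> is_clique V E V"
      using clique_le[OF assms(1)] nw unfolding w_def n_def by fastforce
    then obtain a b where ab: "a \<in> V" "b \<in> V" "a \<noteq> b" "\<not> E a b"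
      unfolding is_clique_def by blast
    have "local_metric_dim V E \<le> card (V - {a,b})"
      by (rule dim_le[OF assms(1) lrs_pair[OF assms(1) ab(1,2,4)]])
    also have "card (V - {a,b}) = n - 2" using ab fin unfolding n_def
      by (simp add: card_Diff_subset)
    finally have d: "local_metric_dim V E \<le> n - 2" .
    have "local_metric_dim V E * (w - 1) \<le> (n - 2) * (w - 1)" using d by simp
    also have "\<dots> \<le> (w - 2) * n" using True w3 nw
    proof -
      have "n = w + 1" using True nw by simp
      obtain k where "w = k + 3" using w3 by (metis add.commute le_Suc_ex)
      then show ?thesis using \<open>n = w + 1\<close> by (simp add: algebra_simps)
    qed
    finally show ?thesis using arith_bound w3 unfolding w_def n_def by simp
  next
    case False
    then have ww: "w + 2 \<le> n" "n \<le> w + 3" using wcases nw by auto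
    have cl: "card K + 2 \<le> card V" if "is_clique V E K" for K
      using clique_le[OF assms(1) that] ww unfolding w_def n_def by simp
    obtain S where S: "good3 V E S" using key[OF assms(1,2) cl] by blast
    have "local_metric_dim V E \<le> card (V - S)"
      by (rule dim_le[OF assms(1) lrs_good3[OF assms(1,2) S]])
    also have "card (V - S) = n - 3"
    proof -
      have "S \<subseteq> V" "card S = 3" using S by (auto simp: good3_def)
      then show ?thesis using fin unfolding n_def by (simp add: card_Diff_subset finite_subset)
    qed
    finally have d: "local_metric_dim V E \<le> n - 3" .
    have "local_metric_dim V E * (w - 1) \<le> (n - 3) * (w - 1)" using d by simp
    also have "\<dots> \<le> (w - 2) * n"
    proof (cases "n = w + 2")
      case True
      obtain k where "w = k + 3" using w3 by (metis add.commute le_Suc_ex)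
      then show ?thesis using True by (simp add: algebra_simps)
    next
      case False
      then have "n = w + 3" using ww by simp
      obtain k where "w = k + 3" using w3 by (metis add.commute le_Suc_ex)
      then show ?thesis using \<open>n = w + 3\<close> by (simp add: algebra_simps)
    qed
    finally show ?thesis using arith_bound w3 unfolding w_def n_def by simp
  qed
qed

end
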